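(* Let $G$ be a valise $(N,k)$ Adinkra with associated doubly even code $C$. Then the automorphism group of $G$ has order $2^{N-2k-a}$, and its orbits on the vertex set are $2^{k+a}$ in number and all of equal size, where $a=0$ if $C$ contains the all-ones word $(1,\dots,1)$ and $a=1$ otherwise.
   Context: An Adinkra of dimension $N$ is a finite connected simple graph $G=(V,E)$ with: a bipartition of $V$ into bosons and fermions (every edge joins a boson and a fermion); a height function (disregarded for valise Adinkras); a coloring of $E$ by colors $\{1,\dots,N\}$ such that each vertex is incident to exactly one edge of each color; an edge parity $\pi:E\to\mathbb{Z}_2$ (parity $1$ = dashed); such that every path with edge colors $(i,j)$, $i\ne j$, lies in a unique 4-cycle with colors $(i,j,i,j)$, each having an odd number of dashed edges. If $|V|=2^{N-k}$, $G$ is an $(N,k)$ Adinkra. Switching a vertex reverses the parity of its incident edges. An automorphism of $G$ is a permutation of $V$ preserving adjacency, edge colors and the boson/fermion bipartition which becomes parity-preserving after switching some set of vertices; automorphisms inducing the same permutation are identified. A doubly even $(N,k)$ code is a $k$-dimensional subspace of $\mathbb{Z}_2^N$ all of whose elements have Hamming weight $\equiv0\pmod4$. Labeling the vertices of an $N$-cube Adinkra by $\mathbb{Z}_2^N$ so that color-$i$ edges join $v$ and $v+e_i$, every $(N,k)$ Adinkra is equivalent to one obtained by identifying vertices whose labels differ by elements of some doubly even $(N,k)$ code $C$; this $C$ is the associated code. *)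

theory Defs
  imports Main
begin

(* Elements of Z_2^N are represented as subsets of {..<N} (support sets);
   addition is symmetric difference. Colors are 0..N-1 (paper: 1..N). *)

definition symdiff :: "nat set \<Rightarrow> nat set \<Rightarrow> nat set" where
  "symdiff x y = (x - y) \<union> (y - x)"

definition doubly_even_code :: "nat \<Rightarrow> nat \<Rightarrow> nat set set \<Rightarrow> bool" where
  "doubly_even_code N k C \<longleftrightarrow>
     C \<subseteq> Pow {..<N} \<and> {} \<in> C \<and>
     (\<forall>x\<in>C. \<forall>y\<in>C. symdiff x y \<in> C) \<and>
     card C = 2 ^ k \<and>
     (\<forall>w\<in>C. 4 dvd card w)"

(* An N-edge-coloured graph with vertex set V is encoded by the maps nb i:
   nb i v is the unique neighbour of v along the edge of colour i.
   The edge of colour i at v is the 2-set {v, nb i v}; dashed gives its parity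
   (True = dashed); boson gives the bipartition (True = boson). *)
definition adinkra ::
  "nat \<Rightarrow> 'v set \<Rightarrow> ('v \<Rightarrow> bool) \<Rightarrow> (nat \<Rightarrow> 'v \<Rightarrow> 'v) \<Rightarrow> ('v set \<Rightarrow> bool) \<Rightarrow> bool" where
  "adinkra N V boson nb dashed \<longleftrightarrow>
     finite V \<and> V \<noteq> {} \<and>
     \<comment> \<open>each vertex has exactly one edge of each colour (a perfect matching per colour)\<close>
     (\<forall>i<N. \<forall>v\<in>V. nb i v \<in> V \<and> nb i v \<noteq> v \<and> nb i (nb i v) = v) \<and>
     \<comment> \<open>simple graph: no two edges of different colours join the same pair\<close>
     (\<forall>i<N. \<forall>j<N. i \<noteq> j \<longrightarrow> (\<forall>v\<in>V. nb i v \<noteq> nb j v)) \<and>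
     \<comment> \<open>every edge joins a boson and a fermion\<close>
     (\<forall>i<N. \<forall>v\<in>V. boson (nb i v) \<longleftrightarrow> \<not> boson v) \<and>
     \<comment> \<open>connected\<close>
     (\<forall>v\<in>V. \<forall>w\<in>V. (\<lambda>x y. x \<in> V \<and> (\<exists>i<N. y = nb i x))\<^sup>*\<^sup>* v w) \<and>
     \<comment> \<open>the path v -i- nb i v -j- x closes to a 4-cycle with colours (i,j,i,j),
         which has an odd number of dashed edges\<close>
     (\<forall>i<N. \<forall>j<N. i \<noteq> j \<longrightarrow> (\<forall>v\<in>V.
        let w = nb i v; x = nb j w; y = nb i x in
          nb j y = v \<and>
          odd (card (Set.filter dashed {{v, w}, {w, x}, {x, y}, {y, v}}))))"

(* Automorphisms, identified with the permutations of V they induce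
   (normalised to be the identity outside V). *)
definition adinkra_aut ::
  "nat \<Rightarrow> 'v set \<Rightarrow> ('v \<Rightarrow> bool) \<Rightarrow> (nat \<Rightarrow> 'v \<Rightarrow> 'v) \<Rightarrow> ('v set \<Rightarrow> bool) \<Rightarrow> ('v \<Rightarrow> 'v) set" where
  "adinkra_aut N V boson nb dashed =
     {\<sigma>. bij_betw \<sigma> V V \<and> (\<forall>v. v \<notin> V \<longrightarrow> \<sigma> v = v) \<and>
          (\<forall>v\<in>V. boson (\<sigma> v) = boson v) \<and>
          (\<forall>i<N. \<forall>v\<in>V. \<sigma> (nb i v) = nb i (\<sigma> v)) \<and>
          (\<exists>S. \<forall>i<N. \<forall>v\<in>V.
             dashed {\<sigma> v, \<sigma> (nb i v)} = (dashed {v, nb i v} \<noteq> ((v \<in> S) \<noteq> (nb i v \<in> S))))}"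

definition aut_orbits ::
  "nat \<Rightarrow> 'v set \<Rightarrow> ('v \<Rightarrow> bool) \<Rightarrow> (nat \<Rightarrow> 'v \<Rightarrow> 'v) \<Rightarrow> ('v set \<Rightarrow> bool) \<Rightarrow> 'v set set" where
  "aut_orbits N V boson nb dashed =
     (\<lambda>v. (\<lambda>\<sigma>. \<sigma> v) ` adinkra_aut N V boson nb dashed) ` V"

definition coset :: "nat set set \<Rightarrow> nat set \<Rightarrow> nat set set" where
  "coset C x = (\<lambda>c. symdiff x c) ` C"

definition quot_vertices :: "nat \<Rightarrow> nat set set \<Rightarrow> nat set set set" where
  "quot_vertices N C = {coset C x | x. x \<subseteq> {..<N}}"

definition quot_nb :: "nat \<Rightarrow> nat set set \<Rightarrow> nat set set" where
  "quot_nb i X = (\<lambda>y. symdiff y {i}) ` X"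

(* C is an associated code of G: G is equivalent (colour- and bipartition-preserving
   graph isomorphism, parities agreeing after switching a set S of vertices) to an
   Adinkra obtained from the N-cube by identifying vertices whose labels differ by C. *)
definition associated_code ::
  "nat \<Rightarrow> 'v set \<Rightarrow> ('v \<Rightarrow> bool) \<Rightarrow> (nat \<Rightarrow> 'v \<Rightarrow> 'v) \<Rightarrow> ('v set \<Rightarrow> bool) \<Rightarrow> nat set set \<Rightarrow> bool" where
  "associated_code N V boson nb dashed C \<longleftrightarrow>
     (\<exists>(bQ :: nat set set \<Rightarrow> bool) (dQ :: nat set set set \<Rightarrow> bool) (\<phi> :: 'v \<Rightarrow> nat set set).
        adinkra N (quot_vertices N C) bQ quot_nb dQ \<and>
        bij_betw \<phi> V (quot_vertices N C) \<and>
        (\<forall>v\<in>V. bQ (\<phi> v) = boson v) \<and>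
        (\<forall>i<N. \<forall>v\<in>V. \<phi> (nb i v) = quot_nb i (\<phi> v)) \<and>
        (\<exists>S. \<forall>i<N. \<forall>v\<in>V.
           dQ {\<phi> v, \<phi> (nb i v)} = (dashed {v, nb i v} \<noteq> ((v \<in> S) \<noteq> (nb i v \<in> S)))))"

end

theory Submission imports Defs begin


lemma symdiff_alt: "symdiff x y = (x \<union> y) - (x \<inter> y)"
  unfolding symdiff_def by blast
lemma symdiff_comm: "symdiff x y = symdiff y x"
  unfolding symdiff_def by blast
lemma symdiff_assoc: "symdiff (symdiff x y) z = symdiff x (symdiff y z)"
  unfolding symdiff_def by blast
lemma symdiff_self[simp]: "symdiff x x = {}"
  unfolding symdiff_def by blast
lemma symdiff_empty[simp]: "symdiff x {} = x" "symdiff {} x = x"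
  unfolding symdiff_def by blast+
lemma symdiff_cancel[simp]: "symdiff x (symdiff x y) = y" "symdiff (symdiff y x) x = y"
  unfolding symdiff_def by blast+
lemma symdiff_single: "symdiff y {i} = (if i \<in> y then y - {i} else insert i y)"
  unfolding symdiff_def by auto
lemma symdiff_sub: "x \<subseteq> A \<Longrightarrow> y \<subseteq> A \<Longrightarrow> symdiff x y \<subseteq> A"
  unfolding symdiff_def by blast
lemma finite_symdiff[simp]: "finite x \<Longrightarrow> finite y \<Longrightarrow> finite (symdiff x y)"
  unfolding symdiff_def by blast
lemma symdiff_Int: "symdiff a b \<inter> c = symdiff (a \<inter> c) (b \<inter> c)"
  unfolding symdiff_def by blast
lemma symdiff_eq_empty_iff: "symdiff a b = {} \<longleftrightarrow> a = b"
  unfolding symdiff_def by blast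

lemma card_sd:
  assumes "finite a" "finite b"
  shows "card ((a - b) \<union> (b - a)) + 2 * card (a \<inter> b) = card a + card b"
proof -
  have "card ((a - b) \<union> (b - a)) = card (a - b) + card (b - a)"
    by (rule card_Un_disjoint) (use assms in auto)
  moreover have "card (a - b) + card (a \<inter> b) = card a"
    using card_Diff_subset_Int[of a b] card_mono[of a "a \<inter> b"] assms by auto
  moreover have "card (b - a) + card (a \<inter> b) = card b"
    using card_Diff_subset_Int[of b a] card_mono[of b "b \<inter> a"] assms inf_commute[of a b] by auto
  ultimately show ?thesis by linarith
qed

lemma odd_card_sd:
  assumes "finite a" "finite b"
  shows "odd (card ((a - b) \<union> (b - a))) = (odd (card a) \<noteq> odd (card b))"
  using card_sd[OF assms] by presburger

lemma odd_card_symdiff: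
  assumes "finite a" "finite b"
  shows "odd (card (symdiff a b)) = (odd (card a) \<noteq> odd (card b))"
  using odd_card_sd[OF assms] unfolding symdiff_def by simp



lemma card_filter_sum: "finite A \<Longrightarrow> card {a\<in>A. Q a} = (\<Sum>a\<in>A. if Q a then 1 else 0 :: nat)"
  by (simp add: sum.If_cases Int_def)

lemma half:
  assumes "finite A" "\<And>a. a\<in>A \<Longrightarrow> f a \<in> A" "\<And>a. a\<in>A \<Longrightarrow> f (f a) = a"
    "\<And>a. a\<in>A \<Longrightarrow> Q (f a) = (\<not> Q a)"
  shows "2 * card {a\<in>A. Q a} = card A"
proof -
  have img: "f ` {a\<in>A. Q a} = {a\<in>A. \<not> Q a}"
  proof
    show "f ` {a\<in>A. Q a} \<subseteq> {a\<in>A. \<not> Q a}" using assms by auto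
    show "{a\<in>A. \<not> Q a} \<subseteq> f ` {a\<in>A. Q a}"
    proof
      fix a assume a: "a \<in> {a\<in>A. \<not> Q a}"
      then have "f a \<in> {a\<in>A. Q a}" using assms by auto
      moreover have "a = f (f a)" using a assms by auto
      ultimately show "a \<in> f ` {a\<in>A. Q a}" by blast
    qed
  qed
  have inj: "inj_on f {a\<in>A. Q a}"
    by (rule inj_onI) (metis (mono_tags, lifting) assms(3) mem_Collect_eq)
  have c1: "card {a\<in>A. \<not> Q a} = card {a\<in>A. Q a}"
    using card_image[OF inj] img by simp
  have "card A = card ({a\<in>A. Q a} \<union> {a\<in>A. \<not> Q a})"
    by (rule arg_cong[where f=card]) blast
  also have "\<dots> = card {a\<in>A. Q a} + card {a\<in>A. \<not> Q a}"
    by (rule card_Un_disjoint) (use assms(1) in auto)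
  finally show ?thesis using c1 by simp
qed

lemma perp_card:
  assumes Hs: "H \<subseteq> Pow {..<N}" and H0: "{} \<in> H"
    and Hc: "\<forall>a\<in>H. \<forall>b\<in>H. symdiff a b \<in> H"
  shows "card {x. x \<subseteq> {..<N} \<and> (\<forall>h\<in>H. even (card (x \<inter> h)))} * card H = 2 ^ N"
proof -
  define U where "U = {..<N::nat}"
  define P where "P = {x. x \<subseteq> {..<N} \<and> (\<forall>h\<in>H. even (card (x \<inter> h)))}"
  have finH: "finite H" using Hs finite_subset by blast
  have finPU: "finite (Pow U)" unfolding U_def by simp
  have cPU: "card (Pow U) = 2 ^ N" unfolding U_def by (simp add: card_Pow)
  have PsubPU: "P \<subseteq> Pow U" unfolding P_def U_def by auto
  have S1: "2 * card {x\<in>Pow U. even (card (x \<inter> h))} = (if h = {} then 2 * 2^N else 2^N)"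
    if h: "h \<in> H" for h
  proof (cases "h = {}")
    case True then show ?thesis using cPU by (simp add: Pow_def)
  next
    case False
    then obtain j where j: "j \<in> h" by blast
    have jU: "j \<in> U" using j h Hs unfolding U_def by auto
    have hfin: "finite h" using h Hs finite_subset by auto
    have "2 * card {x\<in>Pow U. even (card (x \<inter> h))} = card (Pow U)"
    proof (rule half[where f="\<lambda>x. symdiff x {j}"])
      show "finite (Pow U)" by (rule finPU)
      show "symdiff a {j} \<in> Pow U" if "a \<in> Pow U" for a
        using that jU symdiff_sub[of a U "{j}"] by auto
      show "symdiff (symdiff a {j}) {j} = a" for a by simp
      show "even (card (symdiff a {j} \<inter> h)) = (\<not> even (card (a \<inter> h)))" if "a \<in> Pow U" for a
      proof -
        have "symdiff a {j} \<inter> h = symdiff (a \<inter> h) {j}" using j unfolding symdiff_def by blast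
        moreover have "finite (a \<inter> h)" using hfin by simp
        ultimately show ?thesis using odd_card_symdiff[of "a \<inter> h" "{j}"] by auto
      qed
    qed
    then show ?thesis using False cPU by simp
  qed
  have S2: "2 * card {h\<in>H. even (card (x \<inter> h))} = (if x \<in> P then 2 * card H else card H)"
    if x: "x \<in> Pow U" for x
  proof (cases "x \<in> P")
    case True
    then have "{h\<in>H. even (card (x \<inter> h))} = H" unfolding P_def by auto
    then show ?thesis using True by simp
  next
    case False
    then obtain h0 where h0: "h0 \<in> H" "odd (card (x \<inter> h0))"
      using x unfolding P_def U_def by auto
    have xfin: "finite x" using x unfolding U_def by (auto intro: finite_subset)
    have "2 * card {h\<in>H. even (card (x \<inter> h))} = card H"
    proof (rule half[where f="\<lambda>h. symdiff h h0"])
      show "finite H" by (rule finH)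
      show "symdiff a h0 \<in> H" if "a \<in> H" for a using that h0 Hc by auto
      show "symdiff (symdiff a h0) h0 = a" for a by simp
      show "even (card (x \<inter> symdiff a h0)) = (\<not> even (card (x \<inter> a)))" if "a \<in> H" for a
      proof -
        have "x \<inter> symdiff a h0 = symdiff (x \<inter> a) (x \<inter> h0)" unfolding symdiff_def by blast
        then show ?thesis using odd_card_symdiff[of "x \<inter> a" "x \<inter> h0"] xfin h0(2) by auto
      qed
    qed
    then show ?thesis using False by simp
  qed
  have S3: "(\<Sum>x\<in>Pow U. card {h\<in>H. even (card (x \<inter> h))}) =
            (\<Sum>h\<in>H. card {x\<in>Pow U. even (card (x \<inter> h))})"
  proof -
    have "(\<Sum>x\<in>Pow U. card {h\<in>H. even (card (x \<inter> h))}) =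
       (\<Sum>x\<in>Pow U. \<Sum>h\<in>H. if even (card (x \<inter> h)) then 1 else 0)"
      by (rule sum.cong[OF refl], rule card_filter_sum, rule finH)
    also have "\<dots> = (\<Sum>h\<in>H. \<Sum>x\<in>Pow U. if even (card (x \<inter> h)) then 1 else 0)"
      by (rule sum.swap)
    also have "\<dots> = (\<Sum>h\<in>H. card {x\<in>Pow U. even (card (x \<inter> h))})"
      by (rule sum.cong[OF refl], rule card_filter_sum[symmetric], rule finPU)
    finally show ?thesis .
  qed
  have L: "2 * (\<Sum>x\<in>Pow U. card {h\<in>H. even (card (x \<inter> h))}) = card H * (2^N + card P)"
  proof -
    have "2 * (\<Sum>x\<in>Pow U. card {h\<in>H. even (card (x \<inter> h))})
        = (\<Sum>x\<in>Pow U. 2 * card {h\<in>H. even (card (x \<inter> h))})" by (simp add: sum_distrib_left)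
    also have "\<dots> = (\<Sum>x\<in>Pow U. card H * (1 + (if x \<in> P then 1 else 0)))"
      by (rule sum.cong) (auto simp: S2)
    also have "\<dots> = card H * (card (Pow U) + (\<Sum>x\<in>Pow U. if x \<in> P then 1 else 0))"
      by (simp add: sum_distrib_left[symmetric] sum.distrib algebra_simps)
    also have "(\<Sum>x\<in>Pow U. if x \<in> P then 1 else 0) = card P"
      using card_filter_sum[OF finPU, of "\<lambda>x. x \<in> P"] PsubPU
    proof -
      have "{a \<in> Pow U. a \<in> P} = P" using PsubPU by blast
      then show ?thesis using card_filter_sum[OF finPU, of "\<lambda>x. x \<in> P"] by simp
    qed
    finally show ?thesis using cPU by simp
  qed
  have R: "2 * (\<Sum>h\<in>H. card {x\<in>Pow U. even (card (x \<inter> h))}) = 2^N * (card H + 1)"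
  proof -
    have "2 * (\<Sum>h\<in>H. card {x\<in>Pow U. even (card (x \<inter> h))})
        = (\<Sum>h\<in>H. 2 * card {x\<in>Pow U. even (card (x \<inter> h))})" by (simp add: sum_distrib_left)
    also have "\<dots> = (\<Sum>h\<in>H. 2^N * (1 + (if h = {} then 1 else 0)))"
      by (rule sum.cong[OF refl], subst S1, assumption, simp)
    also have "\<dots> = 2^N * (card H + (\<Sum>h\<in>H. if h = {} then 1 else 0))"
      by (simp add: sum_distrib_left[symmetric] sum.distrib algebra_simps)
    also have "(\<Sum>h\<in>H. if h = {} then 1 else (0::nat)) = 1"
      using finH H0 by (simp add: sum.delta)
    finally show ?thesis by simp
  qed
  from L R S3 have "card H * (2^N + card P) = 2^N * (card H + 1)" by simp
  then have "card H * card P = 2 ^ N" by (simp add: algebra_simps)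
  then show ?thesis unfolding P_def by (simp add: mult.commute)
qed



definition Ep :: "nat set \<Rightarrow> nat \<Rightarrow> bool" where
  "Ep y i = odd (card (y \<inter> {..<i}))"

lemma Ep_shift: "Ep (symdiff y x) i = (Ep y i \<noteq> odd (card (x \<inter> {..<i})))"
proof -
  have "symdiff y x \<inter> {..<i} = symdiff (y \<inter> {..<i}) (x \<inter> {..<i})" by (rule symdiff_Int)
  then show ?thesis unfolding Ep_def using odd_card_symdiff[of "y \<inter> {..<i}" "x \<inter> {..<i}"] by simp
qed

lemma Ep_sym: "Ep (symdiff y {i}) i = Ep y i"
  using Ep_shift[of y "{i}" i] by simp

lemma Ep_single: "Ep (symdiff y {j}) i = (Ep y i \<noteq> (j < i))"
proof -
  have "{j} \<inter> {..<i} = (if j < i then {j} else {})" by auto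
  then show ?thesis using Ep_shift[of y "{j}" i] by auto
qed

lemma Ep_cyc: "i \<noteq> j \<Longrightarrow> (Ep y i \<noteq> Ep (symdiff y {i}) j) = (\<not> (Ep (symdiff y {j}) i \<noteq> Ep y j))"
  using Ep_single[of y j i] Ep_single[of y i j] by auto

definition Pr :: "nat set \<Rightarrow> nat set \<Rightarrow> (nat \<times> nat) set" where
  "Pr x y = {(j,i). j \<in> x \<and> i \<in> y \<and> j < i}"

definition Bp :: "nat set \<Rightarrow> nat set \<Rightarrow> bool" where
  "Bp x y = odd (card (Pr x y))"

lemma finite_Pr: "finite x \<Longrightarrow> finite y \<Longrightarrow> finite (Pr x y)"
  by (rule finite_subset[of _ "x \<times> y"]) (auto simp: Pr_def)

lemma Bp_right: "finite x \<Longrightarrow> finite y \<Longrightarrow> finite c \<Longrightarrow> Bp x (symdiff y c) = (Bp x y \<noteq> Bp x c)"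
proof -
  assume f: "finite x" "finite y" "finite c"
  have "Pr x (symdiff y c) = (Pr x y - Pr x c) \<union> (Pr x c - Pr x y)" unfolding Pr_def symdiff_def by auto
  then show ?thesis unfolding Bp_def using odd_card_sd[OF finite_Pr finite_Pr] f by simp
qed

lemma Bp_left: "finite x \<Longrightarrow> finite y \<Longrightarrow> finite c \<Longrightarrow> Bp (symdiff x c) y = (Bp x y \<noteq> Bp c y)"
proof -
  assume f: "finite x" "finite y" "finite c"
  have "Pr (symdiff x c) y = (Pr x y - Pr c y) \<union> (Pr c y - Pr x y)" unfolding Pr_def symdiff_def by auto
  then show ?thesis unfolding Bp_def using odd_card_sd[OF finite_Pr finite_Pr] f by simp
qed

lemma Bp_single: "Bp x {i} = odd (card (x \<inter> {..<i}))"
proof -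
  have "Pr x {i} = (x \<inter> {..<i}) \<times> {i}" unfolding Pr_def by auto
  then show ?thesis unfolding Bp_def by (simp add: card_cartesian_product)
qed

lemma Bp_empty[simp]: "Bp x {} = False" "Bp {} x = False"
  unfolding Bp_def Pr_def by auto

lemma Bp_swap:
  assumes f: "finite c" "finite x" and ev: "even (card c)"
  shows "(Bp c x \<noteq> Bp x c) = odd (card (c \<inter> x))"
proof -
  define A where "A = Pr c x"
  define B where "B = prod.swap ` Pr x c"
  define D where "D = (\<lambda>a. (a,a)) ` (c \<inter> x)"
  have cx: "c \<times> x = (A \<union> B) \<union> D"
    unfolding A_def B_def D_def Pr_def by (auto simp: image_iff) 
  have fA: "finite A" "finite B" "finite D" unfolding A_def B_def D_def using finite_Pr f by auto
  have cB: "card B = card (Pr x c)" unfolding B_def by (rule card_image) simp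
  have cD: "card D = card (c \<inter> x)" unfolding D_def by (rule card_image) (simp add: inj_on_def)
  have "card (c \<times> x) = card (A \<union> B) + card D"
    unfolding cx by (rule card_Un_disjoint) (use fA in \<open>auto simp: A_def B_def D_def Pr_def\<close>)
  also have "card (A \<union> B) = card A + card B"
    by (rule card_Un_disjoint) (use fA in \<open>auto simp: A_def B_def D_def Pr_def\<close>)
  finally have "card c * card x = card (Pr c x) + card (Pr x c) + card (c \<inter> x)"
    using cB cD by (simp add: card_cartesian_product A_def)
  then have "even (card (Pr c x) + card (Pr x c) + card (c \<inter> x))" using ev by (metis even_mult_iff)
  then show ?thesis unfolding Bp_def by auto
qed

fun sp :: "(nat set \<Rightarrow> nat \<Rightarrow> bool) \<Rightarrow> nat \<Rightarrow> nat set \<Rightarrow> bool" where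
  "sp D 0 y = False"
| "sp D (Suc n) y = (if n \<in> y then (sp D n (y - {n}) \<noteq> D (y - {n}) n) else sp D n y)"

lemma pot:
  assumes sym: "\<And>y i. y \<subseteq> {..<N} \<Longrightarrow> i < N \<Longrightarrow> D (symdiff y {i}) i = D y i"
    and cyc: "\<And>y i j. y \<subseteq> {..<N} \<Longrightarrow> i < N \<Longrightarrow> j < N \<Longrightarrow> i \<noteq> j \<Longrightarrow>
               (D y i \<noteq> D (symdiff y {i}) j) = (D (symdiff y {j}) i \<noteq> D y j)"
  shows "n \<le> N \<Longrightarrow> y \<subseteq> {..<n} \<Longrightarrow> i < n \<Longrightarrow> D y i = (sp D n y \<noteq> sp D n (symdiff y {i}))"
proof (induction n arbitrary: y i)
  case 0 then show ?case by simp
next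
  case (Suc n)
  have nN: "n < N" using Suc.prems by simp
  have sub: "\<And>z. z \<subseteq> {..<Suc n} \<Longrightarrow> z \<subseteq> {..<N}" using Suc.prems(1) by auto
  show ?case
  proof (cases "n \<in> y")
    case False
    then have yn: "y \<subseteq> {..<n}" using Suc.prems(2) by (auto simp: less_Suc_eq)
    show ?thesis
    proof (cases "i = n")
      case True
      then show ?thesis using False by (auto simp add: symdiff_single)
    next
      case False2: False
      then have "i < n" using Suc.prems(3) by simp
      moreover have "n \<notin> symdiff y {i}" using False False2 by (simp add: symdiff_single)
      ultimately show ?thesis using Suc.IH[OF _ yn] Suc.prems False by simp
    qed
  next
    case True
    define z where "z = y - {n}"
    have zn: "z \<subseteq> {..<n}" using Suc.prems(2) unfolding z_def by (auto simp: less_Suc_eq)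
    have zN': "z \<subseteq> {..<N}" using zn nN by auto
    have yz: "y = symdiff z {n}" unfolding z_def using True by (auto simp: symdiff_single)
    show ?thesis
    proof (cases "i = n")
      case True2: True
      have zN: "z \<subseteq> {..<N}" using zn nN by auto
      have "D y i = D z n" using sym[OF zN nN] yz True2 by auto
      then show ?thesis using True True2 by (auto simp add: symdiff_single z_def)
    next
      case False2: False
      then have i: "i < n" using Suc.prems(3) by simp
      have e1: "symdiff y {i} = insert n (symdiff z {i})" "n \<notin> symdiff z {i}" "symdiff z {i} - {n} = symdiff z {i}"
        using yz False2 True unfolding symdiff_def z_def by auto
      have IH: "D z i = (sp D n z \<noteq> sp D n (symdiff z {i}))" using Suc.IH[OF _ zn i] Suc.prems by simp
      have cy: "(D z i \<noteq> D (symdiff z {i}) n) = (D y i \<noteq> D z n)"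
        using cyc[OF zN' _ nN False2] i nN yz by auto
      have "sp D (Suc n) y = (sp D n z \<noteq> D z n)" using True by (simp add: z_def)
      moreover have "sp D (Suc n) (symdiff y {i}) = (sp D n (symdiff z {i}) \<noteq> D (symdiff z {i}) n)"
        using e1 by simp
      ultimately show ?thesis using IH cy by auto
    qed
  qed
qed

lemma const_inv:
  assumes "\<And>y i. y \<subseteq> {..<N} \<Longrightarrow> i < N \<Longrightarrow> F (symdiff y {i}) = F y"
  shows "y \<subseteq> {..<N} \<Longrightarrow> F y = F {}"
proof -
  assume y: "y \<subseteq> {..<N}"
  have "finite y" using y finite_subset by blast
  then show ?thesis using y
  proof (induction y rule: finite_induct)
    case empty then show ?case by simp
  next
    case (insert i y)
    have "insert i y = symdiff y {i}" using insert.hyps by (simp add: symdiff_single)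
    then show ?case using assms[of y i] insert by auto
  qed
qed



lemma odd4: "a\<noteq>b \<Longrightarrow> a\<noteq>c \<Longrightarrow> a\<noteq>d \<Longrightarrow> b\<noteq>c \<Longrightarrow> b\<noteq>d \<Longrightarrow> c\<noteq>d \<Longrightarrow>
  odd (card (Set.filter P {a,b,c,d})) = ((P a \<noteq> P b) \<noteq> (P c \<noteq> P d))"
proof -
  assume d: "a\<noteq>b" "a\<noteq>c" "a\<noteq>d" "b\<noteq>c" "b\<noteq>d" "c\<noteq>d"
  have e: "Set.filter P {a,b,c,d} = (if P a then {a} else {}) \<union> (if P b then {b} else {}) \<union> (if P c then {c} else {}) \<union> (if P d then {d} else {})"
    by auto
  show ?thesis unfolding e using d
    by (cases "P a"; cases "P b"; cases "P c"; cases "P d") auto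
qed

lemma coset_eq: "coset C y = coset C y' \<longleftrightarrow> symdiff y y' \<in> C"
  if C0: "{} \<in> C" and Cc: "\<forall>a\<in>C. \<forall>b\<in>C. symdiff a b \<in> C" for C
proof
  assume "coset C y = coset C y'"
  moreover have "y \<in> coset C y" unfolding coset_def using C0 by (auto intro: image_eqI[of _ _ "{}"])
  ultimately obtain c where "c \<in> C" "y = symdiff y' c" unfolding coset_def by auto
  then show "symdiff y y' \<in> C" by (metis symdiff_cancel(1) symdiff_comm)
next
  assume h: "symdiff y y' \<in> C"
  have sub: "coset C a \<subseteq> coset C b" if "symdiff a b \<in> C" for a b
  proof
    fix z assume "z \<in> coset C a"
    then obtain c where c: "c \<in> C" "z = symdiff a c" unfolding coset_def by auto
    have "z = symdiff b (symdiff (symdiff a b) c)" unfolding c(2) symdiff_def by blast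
    moreover have "symdiff (symdiff a b) c \<in> C" using that c Cc by blast
    ultimately show "z \<in> coset C b" unfolding coset_def by blast
  qed
  show "coset C y = coset C y'"
    using sub[OF h] sub[of y' y] h symdiff_comm[of y y'] by auto
qed

lemma quot_nb_coset: "quot_nb i (coset C y) = coset C (symdiff y {i})"
  unfolding quot_nb_def coset_def image_image
  by (rule image_cong) (auto simp: symdiff_def)

locale adk =
  fixes N k :: nat and V :: "'v set" and boson :: "'v \<Rightarrow> bool"
    and nb :: "nat \<Rightarrow> 'v \<Rightarrow> 'v" and dashed :: "'v set \<Rightarrow> bool"
    and C :: "nat set set" and \<phi> :: "'v \<Rightarrow> nat set set"
  assumes adkr: "adinkra N V boson nb dashed"
    and code: "doubly_even_code N k C"
    and phi_bij: "bij_betw \<phi> V (quot_vertices N C)"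
    and phi_nb: "\<forall>i<N. \<forall>v\<in>V. \<phi> (nb i v) = quot_nb i (\<phi> v)"
begin

lemma C_sub: "c \<in> C \<Longrightarrow> c \<subseteq> {..<N}" using code unfolding doubly_even_code_def by auto
lemma C_empty: "{} \<in> C" using code unfolding doubly_even_code_def by auto
lemma C_closed: "\<forall>a\<in>C. \<forall>b\<in>C. symdiff a b \<in> C" using code unfolding doubly_even_code_def by auto
lemma C_card: "card C = 2 ^ k" using code unfolding doubly_even_code_def by auto
lemma C_dvd4: "c \<in> C \<Longrightarrow> 4 dvd card c" using code unfolding doubly_even_code_def by auto
lemma C_even: "c \<in> C \<Longrightarrow> even (card c)"
  using C_dvd4 by (metis dvd_trans even_numeral)
lemma C_fin: "finite C" using C_sub finite_subset[of C "Pow {..<N}"] by auto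
lemma C_fin_el: "c \<in> C \<Longrightarrow> finite c" using C_sub finite_subset by blast

lemma finV: "finite V" and V_ne: "V \<noteq> {}"
  and nb_in: "i < N \<Longrightarrow> v \<in> V \<Longrightarrow> nb i v \<in> V"
  and nb_neq: "i < N \<Longrightarrow> v \<in> V \<Longrightarrow> nb i v \<noteq> v"
  and nb_inv: "i < N \<Longrightarrow> v \<in> V \<Longrightarrow> nb i (nb i v) = v"
  and nb_neq2: "i < N \<Longrightarrow> j < N \<Longrightarrow> i \<noteq> j \<Longrightarrow> v \<in> V \<Longrightarrow> nb i v \<noteq> nb j v"
  and boson_nb: "i < N \<Longrightarrow> v \<in> V \<Longrightarrow> boson (nb i v) = (\<not> boson v)"
  using adkr unfolding adinkra_def by auto

lemma sq: "i < N \<Longrightarrow> j < N \<Longrightarrow> i \<noteq> j \<Longrightarrow> v \<in> V \<Longrightarrow>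
   nb j (nb i (nb j (nb i v))) = v \<and>
   odd (card (Set.filter dashed {{v, nb i v}, {nb i v, nb j (nb i v)}, {nb j (nb i v), nb i (nb j (nb i v))},
           {nb i (nb j (nb i v)), v}}))"
  using adkr unfolding adinkra_def Let_def by blast

definition pi :: "nat set \<Rightarrow> 'v" where "pi y = inv_into V \<phi> (coset C y)"

lemma coset_in: "y \<subseteq> {..<N} \<Longrightarrow> coset C y \<in> \<phi> ` V"
  using phi_bij unfolding bij_betw_def quot_vertices_def by auto

lemma pi_in: "y \<subseteq> {..<N} \<Longrightarrow> pi y \<in> V"
  unfolding pi_def using coset_in by (simp add: inv_into_into)

lemma phi_pi: "y \<subseteq> {..<N} \<Longrightarrow> \<phi> (pi y) = coset C y"
  unfolding pi_def using coset_in by (simp add: f_inv_into_f)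

lemma inj_phi: "inj_on \<phi> V" using phi_bij bij_betw_def by blast

lemma pi_eq: "y \<subseteq> {..<N} \<Longrightarrow> y' \<subseteq> {..<N} \<Longrightarrow> pi y = pi y' \<longleftrightarrow> symdiff y y' \<in> C"
proof -
  assume a: "y \<subseteq> {..<N}" "y' \<subseteq> {..<N}"
  have "pi y = pi y' \<longleftrightarrow> \<phi> (pi y) = \<phi> (pi y')"
    using inj_phi pi_in[OF a(1)] pi_in[OF a(2)] by (auto dest: inj_onD)
  also have "\<dots> \<longleftrightarrow> coset C y = coset C y'" using phi_pi a by simp
  also have "\<dots> \<longleftrightarrow> symdiff y y' \<in> C" using coset_eq C_empty C_closed by blast
  finally show ?thesis .
qed

lemma pi_surj: "v \<in> V \<Longrightarrow> \<exists>y. y \<subseteq> {..<N} \<and> v = pi y"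
proof -
  assume v: "v \<in> V"
  have im: "\<phi> ` V = quot_vertices N C" using phi_bij by (simp add: bij_betw_def)
  then have "\<phi> v \<in> quot_vertices N C" using v by blast
  then obtain y where y: "y \<subseteq> {..<N}" "\<phi> v = coset C y" unfolding quot_vertices_def by auto
  have "pi y = inv_into V \<phi> (\<phi> v)" unfolding pi_def y(2) by simp
  also have "\<dots> = v" using inj_phi v by (rule inv_into_f_f)
  finally have "pi y = v" .
  then show ?thesis using y by auto
qed

lemma pi_nb: "y \<subseteq> {..<N} \<Longrightarrow> i < N \<Longrightarrow> nb i (pi y) = pi (symdiff y {i})"
proof -
  assume a: "y \<subseteq> {..<N}" "i < N"
  have s: "symdiff y {i} \<subseteq> {..<N}" using a symdiff_sub[of y "{..<N}" "{i}"] by auto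
  have "\<phi> (nb i (pi y)) = coset C (symdiff y {i})"
    using phi_nb a pi_in[OF a(1)] phi_pi[OF a(1)] quot_nb_coset by auto
  also have "\<dots> = \<phi> (pi (symdiff y {i}))" using phi_pi[OF s] by simp
  finally show ?thesis using inj_phi nb_in[OF a(2) pi_in[OF a(1)]] pi_in[OF s] by (auto dest: inj_onD)
qed

lemma sd_sub: "y \<subseteq> {..<N} \<Longrightarrow> x \<subseteq> {..<N} \<Longrightarrow> symdiff y x \<subseteq> {..<N}"
  by (rule symdiff_sub)
lemma sd1_sub: "y \<subseteq> {..<N} \<Longrightarrow> i < N \<Longrightarrow> symdiff y {i} \<subseteq> {..<N}"
  by (rule symdiff_sub) auto

definition rho :: "'v \<Rightarrow> nat set" where "rho v = (SOME y. y \<subseteq> {..<N} \<and> pi y = v)"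

lemma rho: assumes "v \<in> V" shows "rho v \<subseteq> {..<N} \<and> pi (rho v) = v"
proof -
  have "\<exists>y. y \<subseteq> {..<N} \<and> pi y = v" using pi_surj[OF assms] by auto
  then show ?thesis unfolding rho_def by (rule someI_ex)
qed

lemma rho_pi: assumes a: "y \<subseteq> {..<N}" shows "symdiff (rho (pi y)) y \<in> C"
proof -
  have r: "rho (pi y) \<subseteq> {..<N}" "pi (rho (pi y)) = pi y" using rho[OF pi_in[OF a]] by auto
  show ?thesis using pi_eq[OF r(1) a] r(2) by simp
qed

definition D :: "nat set \<Rightarrow> nat \<Rightarrow> bool" where
  "D y i = dashed {pi y, pi (symdiff y {i})}"

lemma D_sym: "D (symdiff y {i}) i = D y i"
  unfolding D_def by (simp add: insert_commute)

lemma D_per: "c \<in> C \<Longrightarrow> y \<subseteq> {..<N} \<Longrightarrow> i < N \<Longrightarrow> D (symdiff y c) i = D y i"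
proof -
  assume a: "c \<in> C" "y \<subseteq> {..<N}" "i < N"
  have c: "c \<subseteq> {..<N}" using C_sub a by auto
  have "symdiff (symdiff y c) y = c" unfolding symdiff_def by blast
  then have "pi (symdiff y c) = pi y"
    using pi_eq[OF sd_sub[OF a(2) c] a(2)] a(1) by simp
  moreover have "pi (symdiff (symdiff y c) {i}) = pi (symdiff y {i})"
  proof -
    have "symdiff (symdiff (symdiff y c) {i}) (symdiff y {i}) = c" unfolding symdiff_def by blast
    then show ?thesis using pi_eq[OF sd1_sub[OF sd_sub[OF a(2) c] a(3)] sd1_sub[OF a(2) a(3)]] a(1) by simp
  qed
  ultimately show ?thesis unfolding D_def by simp
qed

lemma D_cyc: "y \<subseteq> {..<N} \<Longrightarrow> i < N \<Longrightarrow> j < N \<Longrightarrow> i \<noteq> j \<Longrightarrow>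
   (D y i \<noteq> D (symdiff y {i}) j) = (\<not> (D (symdiff y {j}) i \<noteq> D y j))"
proof -
  assume a: "y \<subseteq> {..<N}" "i < N" "j < N" "i \<noteq> j"
  define v where "v = pi y"
  define w where "w = nb i v"
  define x where "x = nb j w"
  define z where "z = nb i x"
  have vV: "v \<in> V" unfolding v_def using pi_in a by simp
  have wV: "w \<in> V" and xV: "x \<in> V" and "z \<in> V" unfolding w_def x_def z_def using vV nb_in a by auto
  have w: "w = pi (symdiff y {i})" unfolding w_def v_def using pi_nb a by simp
  have x: "x = pi (symdiff (symdiff y {i}) {j})" unfolding x_def w using pi_nb a sd1_sub by simp
  have z: "z = pi (symdiff y {j})"
  proof -
    have "z = pi (symdiff (symdiff (symdiff y {i}) {j}) {i})" unfolding z_def x using pi_nb a sd1_sub by simp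
    moreover have "symdiff (symdiff (symdiff y {i}) {j}) {i} = symdiff y {j}" unfolding symdiff_def by blast
    ultimately show ?thesis by simp
  qed
  have x2: "x = pi (symdiff (symdiff y {j}) {i})"
    unfolding x by (rule arg_cong[where f=pi]) (unfold symdiff_def, blast)
  have sqv: "nb j z = v" "odd (card (Set.filter dashed {{v, w}, {w, x}, {x, z}, {z, v}}))"
    using sq[OF a(2) a(3) a(4) vV] unfolding w_def x_def z_def by auto
  have d1: "v \<noteq> w" "w \<noteq> x" "x \<noteq> z"
    using nb_neq[OF a(2) vV] nb_neq[OF a(3) wV] nb_neq[OF a(2) xV] unfolding w_def x_def z_def by metis+
  have d2: "z \<noteq> v" using nb_neq[OF a(3) \<open>z \<in> V\<close>] sqv(1) by auto
  have d3: "v \<noteq> x"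
  proof
    assume "v = x"
    then have "nb j v = w" using nb_inv a wV unfolding x_def by auto
    then show False using nb_neq2[OF a(2) a(3) a(4) vV] unfolding w_def by simp
  qed
  have d4: "w \<noteq> z"
  proof
    assume "w = z"
    then have "nb i w = nb i z" by simp
    then have "v = x" using nb_inv a vV xV unfolding w_def z_def by auto
    then show False using d3 by simp
  qed
  have "odd (card (Set.filter dashed {{v, w}, {w, x}, {x, z}, {z, v}})) =
        ((dashed {v, w} \<noteq> dashed {w, x}) \<noteq> (dashed {x, z} \<noteq> dashed {z, v}))"
    by (rule odd4) (use d1 d2 d3 d4 in \<open>auto simp: doubleton_eq_iff\<close>)
  moreover have "dashed {v, w} = D y i" unfolding D_def v_def w by simp
  moreover have "dashed {w, x} = D (symdiff y {i}) j" unfolding D_def w x by simp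
  moreover have "dashed {x, z} = D (symdiff y {j}) i" unfolding D_def z x2 by (simp add: insert_commute)
  moreover have "dashed {z, v} = D y j" unfolding D_def z v_def by (simp add: insert_commute)
  ultimately show ?thesis using sqv(2) by argo
qed

definition D0 :: "nat set \<Rightarrow> nat \<Rightarrow> bool" where "D0 y i = (D y i \<noteq> Ep y i)"

definition s :: "nat set \<Rightarrow> bool" where "s = sp D0 N"

lemma D0_pot: assumes "y \<subseteq> {..<N}" "i < N" shows "D0 y i = (s y \<noteq> s (symdiff y {i}))"
  unfolding s_def
proof (rule pot[of N D0 N y i])
  show "D0 (symdiff y {i}) i = D0 y i" for y i unfolding D0_def using D_sym Ep_sym by simp
  show "(D0 y i \<noteq> D0 (symdiff y {i}) j) = (D0 (symdiff y {j}) i \<noteq> D0 y j)"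
    if "y \<subseteq> {..<N}" "i < N" "j < N" "i \<noteq> j" for y i j
    using D_cyc[OF that] Ep_cyc[OF that(4), of y] unfolding D0_def by argo
qed (use assms in simp_all)

lemma D_pot: assumes "y \<subseteq> {..<N}" "i < N" shows "D y i = ((s y \<noteq> s (symdiff y {i})) \<noteq> Ep y i)"
  using D0_pot[OF assms] unfolding D0_def by argo

end


context adk begin

lemma path:
  assumes sV: "\<And>v. v \<in> V \<Longrightarrow> \<sigma> v \<in> V"
    and snb: "\<And>i v. i < N \<Longrightarrow> v \<in> V \<Longrightarrow> \<sigma> (nb i v) = nb i (\<sigma> v)"
    and x: "x \<subseteq> {..<N}" "\<sigma> (pi {}) = pi x"
  shows "y \<subseteq> {..<N} \<Longrightarrow> \<sigma> (pi y) = pi (symdiff y x)"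
proof -
  assume y: "y \<subseteq> {..<N}"
  have "finite y" using y finite_subset by blast
  then show ?thesis using y
  proof (induction y rule: finite_induct)
    case empty then show ?case using x by simp
  next
    case (insert i y)
    have yU: "y \<subseteq> {..<N}" and iN: "i < N" using insert.prems by auto
    have e1: "insert i y = symdiff y {i}" using insert.hyps by (simp add: symdiff_single)
    have e2: "symdiff (insert i y) x = symdiff (symdiff y x) {i}" unfolding e1 symdiff_def by blast
    have "\<sigma> (pi (insert i y)) = \<sigma> (nb i (pi y))" unfolding e1 using pi_nb[OF yU iN] by simp
    also have "\<dots> = nb i (\<sigma> (pi y))" using snb[OF iN pi_in[OF yU]] .
    also have "\<dots> = nb i (pi (symdiff y x))" using insert.IH[OF yU] by simp
    also have "\<dots> = pi (symdiff (symdiff y x) {i})" using pi_nb[OF sd_sub[OF yU x(1)] iN] .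
    finally show ?case unfolding e2 .
  qed
qed

lemma boson_pi: "y \<subseteq> {..<N} \<Longrightarrow> boson (pi y) = (boson (pi {}) = even (card y))"
proof -
  assume y: "y \<subseteq> {..<N}"
  have "finite y" using y finite_subset by blast
  then show ?thesis using y
  proof (induction y rule: finite_induct)
    case empty then show ?case by simp
  next
    case (insert i y)
    have yU: "y \<subseteq> {..<N}" and iN: "i < N" using insert.prems by auto
    have e1: "insert i y = symdiff y {i}" using insert.hyps by (simp add: symdiff_single)
    have "boson (pi (insert i y)) = boson (nb i (pi y))" unfolding e1 using pi_nb[OF yU iN] by simp
    also have "\<dots> = (\<not> boson (pi y))" using boson_nb[OF iN pi_in[OF yU]] .
    finally show ?case using insert.IH[OF yU] insert.hyps by simp
  qed
qed

definition tau :: "nat set \<Rightarrow> 'v \<Rightarrow> 'v" where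
  "tau x v = (if v \<in> V then pi (symdiff (rho v) x) else v)"

lemma tau_pi: assumes y: "y \<subseteq> {..<N}" and x: "x \<subseteq> {..<N}" shows "tau x (pi y) = pi (symdiff y x)"
proof -
  have r: "rho (pi y) \<subseteq> {..<N}" using rho[OF pi_in[OF y]] by simp
  have "symdiff (symdiff (rho (pi y)) x) (symdiff y x) = symdiff (rho (pi y)) y"
    unfolding symdiff_def by blast
  then have "pi (symdiff (rho (pi y)) x) = pi (symdiff y x)"
    using pi_eq[OF sd_sub[OF r x] sd_sub[OF y x]] rho_pi[OF y] by simp
  then show ?thesis unfolding tau_def using pi_in[OF y] by simp
qed

definition K :: "nat set \<Rightarrow> nat set \<Rightarrow> bool" where
  "K x y = ((s (symdiff y x) \<noteq> s y) \<noteq> Bp x y)"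

lemma fin_U: "y \<subseteq> {..<N} \<Longrightarrow> finite y" using finite_subset by blast

lemma K_step:
  assumes x: "x \<subseteq> {..<N}" and y: "y \<subseteq> {..<N}" and i: "i < N"
  shows "(K x (symdiff y {i}) \<noteq> K x y) = (D (symdiff y x) i \<noteq> D y i)"
proof -
  have a: "D (symdiff y x) i = ((s (symdiff y x) \<noteq> s (symdiff (symdiff y x) {i})) \<noteq> Ep (symdiff y x) i)"
    using D_pot[OF sd_sub[OF y x] i] .
  have b: "D y i = ((s y \<noteq> s (symdiff y {i})) \<noteq> Ep y i)" using D_pot[OF y i] .
  have c: "Ep (symdiff y x) i = (Ep y i \<noteq> odd (card (x \<inter> {..<i})))" by (rule Ep_shift)
  have d: "Bp x (symdiff y {i}) = (Bp x y \<noteq> odd (card (x \<inter> {..<i})))"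
    using Bp_right[OF fin_U[OF x] fin_U[OF y], of "{i}"] Bp_single[of x i] by simp
  have e: "symdiff (symdiff y {i}) x = symdiff (symdiff y x) {i}" unfolding symdiff_def by blast
  show ?thesis unfolding K_def e using a b c d by argo
qed

lemma G_lem:
  assumes c: "c \<in> C" and y: "y \<subseteq> {..<N}"
  shows "(s (symdiff y c) \<noteq> s y) = ((s c \<noteq> s {}) \<noteq> Bp c y)"
proof -
  have cU: "c \<subseteq> {..<N}" using C_sub c by simp
  define F where "F y = ((s (symdiff y c) \<noteq> s y) \<noteq> Bp c y)" for y
  have inv: "F (symdiff y {i}) = F y" if y: "y \<subseteq> {..<N}" and i: "i < N" for y i
  proof -
    have p: "D (symdiff y c) i = D y i" using D_per[OF c y i] .
    have a: "D (symdiff y c) i = ((s (symdiff y c) \<noteq> s (symdiff (symdiff y c) {i})) \<noteq> Ep (symdiff y c) i)"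
      using D_pot[OF sd_sub[OF y cU] i] .
    have b: "D y i = ((s y \<noteq> s (symdiff y {i})) \<noteq> Ep y i)" using D_pot[OF y i] .
    have cc: "Ep (symdiff y c) i = (Ep y i \<noteq> odd (card (c \<inter> {..<i})))" by (rule Ep_shift)
    have d: "Bp c (symdiff y {i}) = (Bp c y \<noteq> odd (card (c \<inter> {..<i})))"
      using Bp_right[OF fin_U[OF cU] fin_U[OF y], of "{i}"] Bp_single[of c i] by simp
    have e: "symdiff (symdiff y {i}) c = symdiff (symdiff y c) {i}" unfolding symdiff_def by blast
    show ?thesis unfolding F_def e using p a b cc d by argo
  qed
  have "F y = F {}" using const_inv[of N F, OF inv y] by blast
  then show ?thesis unfolding F_def by simp argo
qed

lemma K_per:
  assumes x: "x \<subseteq> {..<N}" and c: "c \<in> C" and y: "y \<subseteq> {..<N}"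
  shows "(K x (symdiff y c) \<noteq> K x y) = odd (card (c \<inter> x))"
proof -
  have cU: "c \<subseteq> {..<N}" using C_sub c by simp
  have g1: "(s (symdiff (symdiff y x) c) \<noteq> s (symdiff y x)) = ((s c \<noteq> s {}) \<noteq> Bp c (symdiff y x))"
    using G_lem[OF c sd_sub[OF y x]] .
  have g2: "(s (symdiff y c) \<noteq> s y) = ((s c \<noteq> s {}) \<noteq> Bp c y)" using G_lem[OF c y] .
  have e: "symdiff (symdiff y c) x = symdiff (symdiff y x) c" unfolding symdiff_def by blast
  have b1: "Bp c (symdiff y x) = (Bp c y \<noteq> Bp c x)" using Bp_right fin_U cU x y by blast
  have b2: "Bp x (symdiff y c) = (Bp x y \<noteq> Bp x c)" using Bp_right fin_U cU x y by blast
  have sw: "(Bp c x \<noteq> Bp x c) = odd (card (c \<inter> x))"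
    using Bp_swap[OF fin_U[OF cU] fin_U[OF x] C_even[OF c]] .
  show ?thesis unfolding K_def e using g1 g2 b1 b2 sw by argo
qed

lemma dash_iff:
  assumes x: "x \<subseteq> {..<N}"
  shows "(\<exists>S. \<forall>i<N. \<forall>v\<in>V. dashed {tau x v, tau x (nb i v)} = (dashed {v, nb i v} \<noteq> ((v \<in> S) \<noteq> (nb i v \<in> S))))
         \<longleftrightarrow> (\<forall>c\<in>C. even (card (x \<inter> c)))"
proof -
  have tr1: "dashed {tau x (pi y), tau x (nb i (pi y))} = D (symdiff y x) i"
    if y: "y \<subseteq> {..<N}" and i: "i < N" for y i
  proof -
    have "tau x (nb i (pi y)) = pi (symdiff (symdiff y {i}) x)"
      using pi_nb[OF y i] tau_pi[OF sd1_sub[OF y i] x] by simp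
    also have "symdiff (symdiff y {i}) x = symdiff (symdiff y x) {i}" unfolding symdiff_def by blast
    finally show ?thesis unfolding D_def using tau_pi[OF y x] by simp
  qed
  have tr2: "dashed {pi y, nb i (pi y)} = D y i" if y: "y \<subseteq> {..<N}" and i: "i < N" for y i
    unfolding D_def using pi_nb[OF y i] by simp
  show ?thesis
  proof
    assume "\<exists>S. \<forall>i<N. \<forall>v\<in>V. dashed {tau x v, tau x (nb i v)} = (dashed {v, nb i v} \<noteq> ((v \<in> S) \<noteq> (nb i v \<in> S)))"
    then obtain S where S: "\<And>i v. i < N \<Longrightarrow> v \<in> V \<Longrightarrow>
        dashed {tau x v, tau x (nb i v)} = (dashed {v, nb i v} \<noteq> ((v \<in> S) \<noteq> (nb i v \<in> S)))" by blast
    define F where "F y = ((pi y \<in> S) \<noteq> K x y)" for y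
    have inv: "F (symdiff y {i}) = F y" if y: "y \<subseteq> {..<N}" and i: "i < N" for y i
    proof -
      have 1: "D (symdiff y x) i = (D y i \<noteq> ((pi y \<in> S) \<noteq> (pi (symdiff y {i}) \<in> S)))"
        using S[OF i pi_in[OF y]] tr1[OF y i] tr2[OF y i] pi_nb[OF y i] by simp
      show ?thesis unfolding F_def using 1 K_step[OF x y i] by argo
    qed
    show "\<forall>c\<in>C. even (card (x \<inter> c))"
    proof
      fix c assume c: "c \<in> C"
      have cU: "c \<subseteq> {..<N}" using C_sub c by simp
      have "F c = F {}" using const_inv[of N F, OF inv cU] by blast
      moreover have "pi c = pi {}" using pi_eq[OF cU] c by simp
      ultimately have "K x c = K x {}" unfolding F_def by simp argo
      moreover have "(K x (symdiff {} c) \<noteq> K x {}) = odd (card (c \<inter> x))" using K_per[OF x c, of "{}"] by simp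
      ultimately show "even (card (x \<inter> c))" by (simp add: Int_commute)
    qed
  next
    assume orth: "\<forall>c\<in>C. even (card (x \<inter> c))"
    define S where "S = {v \<in> V. K x (rho v)}"
    have inS: "(pi y \<in> S) = K x y" if y: "y \<subseteq> {..<N}" for y
    proof -
      define c' where "c' = symdiff (rho (pi y)) y"
      have c': "c' \<in> C" unfolding c'_def using rho_pi[OF y] .
      have r: "rho (pi y) = symdiff y c'" unfolding c'_def symdiff_def by blast
      have "K x (symdiff y c') = K x y" using K_per[OF x c' y] orth c' by (simp add: Int_commute)
      then show ?thesis unfolding S_def using pi_in[OF y] r by simp
    qed
    show "\<exists>S. \<forall>i<N. \<forall>v\<in>V. dashed {tau x v, tau x (nb i v)} = (dashed {v, nb i v} \<noteq> ((v \<in> S) \<noteq> (nb i v \<in> S)))"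
    proof (intro exI allI impI ballI)
      fix i v assume i: "i < N" and v: "v \<in> V"
      obtain y where y: "y \<subseteq> {..<N}" "v = pi y" using pi_surj[OF v] by blast
      have 1: "nb i v \<in> S \<longleftrightarrow> K x (symdiff y {i})" using pi_nb[OF y(1) i] inS[OF sd1_sub[OF y(1) i]] y(2) by simp
      have 2: "v \<in> S \<longleftrightarrow> K x y" using inS[OF y(1)] y(2) by simp
      show "dashed {tau x v, tau x (nb i v)} = (dashed {v, nb i v} \<noteq> ((v \<in> S) \<noteq> (nb i v \<in> S)))"
        unfolding y(2) using tr1[OF y(1) i] tr2[OF y(1) i] K_step[OF x y(1) i] 1 2 unfolding y(2) by argo
    qed
  qed
qed

end


lemma fiber_count:
  assumes A: "finite A" and fB: "f ` A \<subseteq> B" and B: "finite B"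
    and m: "\<And>b. b \<in> B \<Longrightarrow> card {a\<in>A. f a = b} = m"
  shows "card A = m * card B"
proof -
  have "card A = (\<Sum>a\<in>A. 1::nat)" by simp
  also have "\<dots> = (\<Sum>b\<in>B. \<Sum>a\<in>{x. x \<in> A \<and> f x = b}. 1::nat)"
    using sum.group[OF A B fB, of "\<lambda>_. 1::nat"] by simp
  also have "\<dots> = (\<Sum>b\<in>B. m)" by (rule sum.cong) (simp_all add: m)
  finally show ?thesis by simp
qed

lemma pow2_eq:
  fixes m a b :: nat
  assumes "m * 2 ^ a = 2 ^ b"
  shows "a \<le> b \<and> m = 2 ^ (b - a)"
proof -
  have m0: "m > 0" using assms by (cases m) auto
  have ab: "a \<le> b"
  proof (rule ccontr)
    assume "\<not> a \<le> b"
    then have "(2::nat) ^ b < 2 ^ a" by simp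
    also have "\<dots> \<le> m * 2 ^ a" using m0 by simp
    finally show False using assms by simp
  qed
  then have "(2::nat) ^ b = 2 ^ (b - a) * 2 ^ a" by (simp add: power_add[symmetric])
  then have "m * 2 ^ a = 2 ^ (b - a) * 2 ^ a" using assms by simp
  then show ?thesis using ab by simp
qed

context adk begin

definition Xs :: "nat set set" where
  "Xs = {x. x \<subseteq> {..<N} \<and> even (card x) \<and> (\<forall>c\<in>C. even (card (x \<inter> c)))}"

abbreviation "AUT \<equiv> adinkra_aut N V boson nb dashed"

lemma even_sd: "finite a \<Longrightarrow> finite b \<Longrightarrow> even (card (symdiff a b)) = (even (card a) = even (card b))"
  using odd_card_symdiff by blast

lemma C_orth: "c \<in> C \<Longrightarrow> c' \<in> C \<Longrightarrow> even (card (c \<inter> c'))"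
proof -
  assume c: "c \<in> C" "c' \<in> C"
  have "card (symdiff c c') + 2 * card (c \<inter> c') = card c + card c'"
    using card_sd[OF C_fin_el C_fin_el] c unfolding symdiff_def by simp
  moreover have "4 dvd card (symdiff c c')" "4 dvd card c" "4 dvd card c'"
    using C_dvd4 C_closed c by auto
  ultimately have "4 dvd 2 * card (c \<inter> c')" by (metis dvd_add_right_iff dvd_add)
  then show ?thesis by presburger
qed

lemma Xs_sd: assumes "x \<in> Xs" "x' \<in> Xs" shows "symdiff x x' \<in> Xs"
proof -
  have f: "finite x" "finite x'" using assms unfolding Xs_def using fin_U by auto
  have "even (card (symdiff x x' \<inter> c))" if "c \<in> C" for c
  proof -
    have "symdiff x x' \<inter> c = symdiff (x \<inter> c) (x' \<inter> c)" by (rule symdiff_Int)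
    then show ?thesis using even_sd[of "x \<inter> c" "x' \<inter> c"] f assms that unfolding Xs_def by auto
  qed
  then show ?thesis using assms f even_sd[OF f] sd_sub unfolding Xs_def by auto
qed

lemma C_Xs: "c \<in> C \<Longrightarrow> c \<in> Xs"
  unfolding Xs_def using C_sub C_even C_orth by auto

lemma Xs_empty: "{} \<in> Xs" unfolding Xs_def by simp

lemma Xs_sub: "x \<in> Xs \<Longrightarrow> x \<subseteq> {..<N}" unfolding Xs_def by simp

lemma tau_tau: "x \<subseteq> {..<N} \<Longrightarrow> x' \<subseteq> {..<N} \<Longrightarrow> v \<in> V \<Longrightarrow> tau x' (tau x v) = tau (symdiff x x') v"
proof -
  assume a: "x \<subseteq> {..<N}" "x' \<subseteq> {..<N}" "v \<in> V"
  obtain y where y: "y \<subseteq> {..<N}" "v = pi y" using pi_surj[OF a(3)] by blast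
  have "symdiff (symdiff y x) x' = symdiff y (symdiff x x')" by (rule symdiff_assoc)
  then show ?thesis unfolding y(2)
    using tau_pi[OF y(1) a(1)] tau_pi[OF sd_sub[OF y(1) a(1)] a(2)] tau_pi[OF y(1) sd_sub[OF a(1) a(2)]]
    by simp
qed

lemma tau_in: "x \<subseteq> {..<N} \<Longrightarrow> v \<in> V \<Longrightarrow> tau x v \<in> V"
  unfolding tau_def using pi_in sd_sub rho by auto

lemma tau_aut: assumes xX: "x \<in> Xs" shows "tau x \<in> AUT"
proof -
  have x: "x \<subseteq> {..<N}" using xX Xs_sub by simp
  have bij: "bij_betw (tau x) V V"
  proof (rule bij_betw_byWitness[where f'="tau x"])
    have inv: "tau x (tau x a) = a" if a: "a \<in> V" for a
      using tau_tau[OF x x a] rho[OF a] unfolding tau_def using a by simp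
    show "\<forall>a\<in>V. tau x (tau x a) = a" using inv by blast
    show "\<forall>a'\<in>V. tau x (tau x a') = a'" using inv by blast
    show "tau x ` V \<subseteq> V" using tau_in[OF x] by auto
    show "tau x ` V \<subseteq> V" using tau_in[OF x] by auto
  qed
  have out: "\<forall>v. v \<notin> V \<longrightarrow> tau x v = v" unfolding tau_def by simp
  have bos: "\<forall>v\<in>V. boson (tau x v) = boson v"
  proof
    fix v assume v: "v \<in> V"
    obtain y where y: "y \<subseteq> {..<N}" "v = pi y" using pi_surj[OF v] by blast
    have "even (card (symdiff y x)) = even (card y)"
      using even_sd[OF fin_U[OF y(1)] fin_U[OF x]] xX unfolding Xs_def by simp
    then show "boson (tau x v) = boson v" unfolding y(2) tau_pi[OF y(1) x]
      using boson_pi[OF y(1)] boson_pi[OF sd_sub[OF y(1) x]] by simp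
  qed
  have com: "\<forall>i<N. \<forall>v\<in>V. tau x (nb i v) = nb i (tau x v)"
  proof (intro allI impI ballI)
    fix i v assume i: "i < N" and v: "v \<in> V"
    obtain y where y: "y \<subseteq> {..<N}" "v = pi y" using pi_surj[OF v] by blast
    have e: "symdiff (symdiff y {i}) x = symdiff (symdiff y x) {i}" unfolding symdiff_def by blast
    show "tau x (nb i v) = nb i (tau x v)" unfolding y(2)
      using pi_nb[OF y(1) i] tau_pi[OF sd1_sub[OF y(1) i] x] tau_pi[OF y(1) x]
        pi_nb[OF sd_sub[OF y(1) x] i] e by simp
  qed
  have dsh: "\<exists>S. \<forall>i<N. \<forall>v\<in>V. dashed {tau x v, tau x (nb i v)} = (dashed {v, nb i v} \<noteq> ((v \<in> S) \<noteq> (nb i v \<in> S)))"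
    using dash_iff[OF x] xX unfolding Xs_def by simp
  show ?thesis unfolding adinkra_aut_def using bij out bos com dsh by blast
qed

lemma aut_tau: assumes s: "\<sigma> \<in> AUT" shows "\<exists>x\<in>Xs. \<sigma> = tau x"
proof -
  note h = s[unfolded adinkra_aut_def mem_Collect_eq]
  have bij: "bij_betw \<sigma> V V" using h by (rule conjunct1)
  have out: "\<forall>v. v \<notin> V \<longrightarrow> \<sigma> v = v" using h[THEN conjunct2] by (rule conjunct1)
  have bos: "\<forall>v\<in>V. boson (\<sigma> v) = boson v" using h[THEN conjunct2, THEN conjunct2] by (rule conjunct1)
  have com: "\<forall>i<N. \<forall>v\<in>V. \<sigma> (nb i v) = nb i (\<sigma> v)"
    using h[THEN conjunct2, THEN conjunct2, THEN conjunct2] by (rule conjunct1)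
  have dsh: "\<exists>S. \<forall>i<N. \<forall>v\<in>V. dashed {\<sigma> v, \<sigma> (nb i v)} = (dashed {v, nb i v} \<noteq> ((v \<in> S) \<noteq> (nb i v \<in> S)))"
    using h[THEN conjunct2, THEN conjunct2, THEN conjunct2] by (rule conjunct2)
  have sV: "\<And>v. v \<in> V \<Longrightarrow> \<sigma> v \<in> V" by (rule bij_betw_apply[OF bij])
  have p0: "pi {} \<in> V" by (rule pi_in) simp
  define x where "x = rho (\<sigma> (pi {}))"
  have r: "rho (\<sigma> (pi {})) \<subseteq> {..<N} \<and> pi (rho (\<sigma> (pi {}))) = \<sigma> (pi {})" by (rule rho[OF sV[OF p0]])
  have x1: "x \<subseteq> {..<N}" unfolding x_def using r by (rule conjunct1)
  have x2: "\<sigma> (pi {}) = pi x" unfolding x_def using r[THEN conjunct2] by (rule sym)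
  note x = x1 x2
  have pth: "\<And>y. y \<subseteq> {..<N} \<Longrightarrow> \<sigma> (pi y) = pi (symdiff y x)"
  proof -
    fix y assume y: "y \<subseteq> {..<N}"
    have snb: "\<And>i v. i < N \<Longrightarrow> v \<in> V \<Longrightarrow> \<sigma> (nb i v) = nb i (\<sigma> v)" using com by blast
    show "\<sigma> (pi y) = pi (symdiff y x)" by (rule path[where \<sigma>=\<sigma> and x=x, OF sV snb x1 x2 y])
  qed
  have eq: "\<sigma> = tau x"
  proof
    fix v show "\<sigma> v = tau x v"
    proof (cases "v \<in> V")
      case True
      obtain y where y: "y \<subseteq> {..<N}" "v = pi y" using pi_surj[OF True] by blast
      show ?thesis unfolding y(2) using pth[OF y(1)] tau_pi[OF y(1) x(1)] by simp
    next
      case False then show ?thesis using out unfolding tau_def by simp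
    qed
  qed
  have ev: "even (card x)"
  proof -
    have "boson (\<sigma> (pi {})) = boson (pi {})" using bos p0 by blast
    then have "boson (pi x) = boson (pi {})" using x2 by simp
    then show ?thesis using boson_pi[OF x1] by argo
  qed
  have orth: "\<forall>c\<in>C. even (card (x \<inter> c))"
    using dash_iff[OF x(1)] dsh unfolding eq by simp
  show ?thesis using eq ev orth x(1) unfolding Xs_def by blast
qed

lemma aut_eq: "AUT = tau ` Xs"
proof
  show "AUT \<subseteq> tau ` Xs"
  proof
    fix \<sigma> assume "\<sigma> \<in> AUT"
    then obtain x where "x \<in> Xs" "\<sigma> = tau x" using aut_tau by blast
    then show "\<sigma> \<in> tau ` Xs" by simp
  qed
  show "tau ` Xs \<subseteq> AUT" using tau_aut by auto
qed

lemma tau_eq: assumes x: "x \<subseteq> {..<N}" and x': "x' \<subseteq> {..<N}"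
  shows "tau x = tau x' \<longleftrightarrow> symdiff x x' \<in> C"
proof
  assume "tau x = tau x'"
  then have "tau x (pi {}) = tau x' (pi {})" by simp
  then have "pi x = pi x'" using tau_pi[OF _ x] tau_pi[OF _ x'] by simp
  then show "symdiff x x' \<in> C" using pi_eq[OF x x'] by simp
next
  assume h: "symdiff x x' \<in> C"
  show "tau x = tau x'"
  proof
    fix v show "tau x v = tau x' v"
    proof (cases "v \<in> V")
      case True
      have r: "rho v \<subseteq> {..<N}" using rho[OF True] by simp
      have "symdiff (symdiff (rho v) x) (symdiff (rho v) x') = symdiff x x'" unfolding symdiff_def by blast
      then show ?thesis unfolding tau_def using True pi_eq[OF sd_sub[OF r x] sd_sub[OF r x']] h by simp
    next
      case False then show ?thesis unfolding tau_def by simp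
    qed
  qed
qed

lemma finXs: "finite Xs"
  by (rule finite_subset[of _ "Pow {..<N}"]) (auto simp: Xs_def)

lemma card_aut: "card Xs = card C * card AUT"
proof (rule fiber_count[where f=tau])
  show "finite Xs" by (rule finXs)
  show "tau ` Xs \<subseteq> AUT" using aut_eq by simp
  show "finite AUT" using aut_eq finXs by simp
  fix \<sigma> assume "\<sigma> \<in> AUT"
  then obtain x0 where x0: "x0 \<in> Xs" "\<sigma> = tau x0" using aut_tau by blast
  have x0U: "x0 \<subseteq> {..<N}" using x0 Xs_sub by simp
  have "{x\<in>Xs. tau x = \<sigma>} = symdiff x0 ` C"
  proof
    show "{x\<in>Xs. tau x = \<sigma>} \<subseteq> symdiff x0 ` C"
    proof
      fix x assume "x \<in> {x\<in>Xs. tau x = \<sigma>}"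
      then have x: "x \<in> Xs" "tau x = tau x0" using x0 by auto
      then have "symdiff x0 x \<in> C" using tau_eq[OF x0U Xs_sub[OF x(1)]] by simp
      moreover have "x = symdiff x0 (symdiff x0 x)" by simp
      ultimately show "x \<in> symdiff x0 ` C" by blast
    qed
    show "symdiff x0 ` C \<subseteq> {x\<in>Xs. tau x = \<sigma>}"
    proof
      fix x assume "x \<in> symdiff x0 ` C"
      then obtain c where c: "c \<in> C" "x = symdiff x0 c" by blast
      have xX: "x \<in> Xs" using Xs_sd[OF x0(1) C_Xs[OF c(1)]] c by simp
      have "symdiff x x0 = c" unfolding c(2) symdiff_def by blast
      then have "tau x = tau x0" using tau_eq[OF Xs_sub[OF xX] x0U] c by simp
      then show "x \<in> {x\<in>Xs. tau x = \<sigma>}" using xX x0 by simp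
    qed
  qed
  moreover have "inj_on (symdiff x0) C" by (rule inj_onI) (metis symdiff_cancel(1))
  ultimately show "card {x\<in>Xs. tau x = \<sigma>} = card C" by (simp add: card_image)
qed

end


context adk begin

definition Cp :: "nat set set" where "Cp = C \<union> symdiff {..<N} ` C"

lemma Cp_sub: "Cp \<subseteq> Pow {..<N}"
  unfolding Cp_def using C_sub by (auto simp: symdiff_def)

lemma Cp_empty: "{} \<in> Cp" unfolding Cp_def using C_empty by simp

lemma Cp_closed: "\<forall>a\<in>Cp. \<forall>b\<in>Cp. symdiff a b \<in> Cp"
proof (intro ballI)
  fix a b assume a: "a \<in> Cp" and b: "b \<in> Cp"
  let ?U = "{..<N::nat}"
  show "symdiff a b \<in> Cp"
  proof (cases "a \<in> C")
    case aC: True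
    show ?thesis
    proof (cases "b \<in> C")
      case True then show ?thesis using aC C_closed unfolding Cp_def by blast
    next
      case False
      then obtain b' where b': "b' \<in> C" "b = symdiff ?U b'" using b unfolding Cp_def by blast
      have "symdiff a b = symdiff ?U (symdiff a b')" unfolding b'(2) symdiff_def by blast
      then show ?thesis using C_closed aC b'(1) unfolding Cp_def by blast
    qed
  next
    case aN: False
    then obtain a' where a': "a' \<in> C" "a = symdiff ?U a'" using a unfolding Cp_def by blast
    show ?thesis
    proof (cases "b \<in> C")
      case True
      have "symdiff a b = symdiff ?U (symdiff a' b)" unfolding a'(2) symdiff_def by blast
      then show ?thesis using C_closed True a'(1) unfolding Cp_def by blast
    next
      case False
      then obtain b' where b': "b' \<in> C" "b = symdiff ?U b'" using b unfolding Cp_def by blast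
      have "symdiff a b = symdiff a' b'" unfolding a'(2) b'(2) symdiff_def by blast
      moreover have "symdiff a' b' \<in> C" using C_closed a'(1) b'(1) by blast
      ultimately show ?thesis unfolding Cp_def by simp
    qed
  qed
qed

lemma Xs_perp: "Xs = {x. x \<subseteq> {..<N} \<and> (\<forall>h\<in>Cp. even (card (x \<inter> h)))}"
proof (intro set_eqI iffI)
  fix x assume x: "x \<in> Xs"
  have xU: "x \<subseteq> {..<N}" using x Xs_sub by simp
  have "even (card (x \<inter> h))" if h: "h \<in> Cp" for h
  proof (cases "h \<in> C")
    case True then show ?thesis using x unfolding Xs_def by simp
  next
    case False
    then obtain c where c: "c \<in> C" "h = symdiff {..<N} c" using h unfolding Cp_def by blast
    have cU: "c \<subseteq> {..<N}" using C_sub c by simp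
    have "x \<inter> h = x - c" unfolding c(2) symdiff_def using xU cU by blast
    moreover have "card (x - c) + card (x \<inter> c) = card x"
      using card_Diff_subset_Int[of x c] card_mono[of x "x \<inter> c"] fin_U[OF xU] by auto
    moreover have "even (card x)" "even (card (x \<inter> c))" using x c unfolding Xs_def by auto
    ultimately show ?thesis by presburger
  qed
  then show "x \<in> {x. x \<subseteq> {..<N} \<and> (\<forall>h\<in>Cp. even (card (x \<inter> h)))}" using xU by blast
next
  fix x assume x: "x \<in> {x. x \<subseteq> {..<N} \<and> (\<forall>h\<in>Cp. even (card (x \<inter> h)))}"
  then have xU: "x \<subseteq> {..<N}" and h: "\<And>h. h \<in> Cp \<Longrightarrow> even (card (x \<inter> h))" by auto
  have "{..<N} \<in> Cp" unfolding Cp_def using C_empty by (auto intro!: image_eqI[of _ _ "{}"])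
  then have "even (card x)" using h[of "{..<N}"] xU by (simp add: Int_absorb2)
  moreover have "\<forall>c\<in>C. even (card (x \<inter> c))" using h unfolding Cp_def by blast
  ultimately show "x \<in> Xs" unfolding Xs_def using xU by blast
qed

lemma card_Xs: "card Xs * card Cp = 2 ^ N"
  unfolding Xs_perp by (rule perp_card[OF Cp_sub Cp_empty Cp_closed])

lemma card_Cp: "card Cp = 2 ^ (k + (if {..<N} \<in> C then 0 else 1))"
proof (cases "{..<N} \<in> C")
  case True
  then have "symdiff {..<N} ` C \<subseteq> C" using C_closed by blast
  then have "Cp = C" unfolding Cp_def by blast
  then show ?thesis using True C_card by simp
next
  case False
  have disj: "C \<inter> symdiff {..<N} ` C = {}"
  proof (rule ccontr)
    assume "C \<inter> symdiff {..<N} ` C \<noteq> {}"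
    then obtain c where c: "c \<in> C" "symdiff {..<N} c \<in> C" by blast
    have "symdiff c (symdiff {..<N} c) = {..<N}" unfolding symdiff_def by blast
    then show False using C_closed c False by metis
  qed
  have inj: "inj_on (symdiff {..<N}) C" by (rule inj_onI) (metis symdiff_cancel(1))
  have "card Cp = card C + card (symdiff {..<N} ` C)"
    unfolding Cp_def by (rule card_Un_disjoint) (use C_fin disj in auto)
  also have "card (symdiff {..<N} ` C) = card C" using inj by (rule card_image)
  finally show ?thesis using False C_card by simp
qed

definition orb :: "'v \<Rightarrow> 'v set" where "orb v = (\<lambda>\<sigma>. \<sigma> v) ` AUT"

lemma orb_tau: "orb v = (\<lambda>x. tau x v) ` Xs"
  unfolding orb_def aut_eq image_image by simp

lemma card_orb: assumes v: "v \<in> V" shows "card (orb v) = card AUT"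
proof -
  have "inj_on (\<lambda>\<sigma>. \<sigma> v) AUT"
  proof (rule inj_onI)
    fix \<sigma> \<sigma>' assume s: "\<sigma> \<in> AUT" "\<sigma>' \<in> AUT" and e: "\<sigma> v = \<sigma>' v"
    obtain x where x: "x \<in> Xs" "\<sigma> = tau x" using aut_tau[OF s(1)] by blast
    obtain x' where x': "x' \<in> Xs" "\<sigma>' = tau x'" using aut_tau[OF s(2)] by blast
    obtain y where y: "y \<subseteq> {..<N}" "v = pi y" using pi_surj[OF v] by blast
    have xU: "x \<subseteq> {..<N}" "x' \<subseteq> {..<N}" using x x' Xs_sub by auto
    have "pi (symdiff y x) = pi (symdiff y x')" using e unfolding x(2) x'(2) y(2)
      using tau_pi[OF y(1) xU(1)] tau_pi[OF y(1) xU(2)] by simp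
    moreover have "symdiff (symdiff y x) (symdiff y x') = symdiff x x'" unfolding symdiff_def by blast
    ultimately have "symdiff x x' \<in> C" using pi_eq[OF sd_sub[OF y(1) xU(1)] sd_sub[OF y(1) xU(2)]] by simp
    then show "\<sigma> = \<sigma>'" using tau_eq[OF xU] x(2) x'(2) by simp
  qed
  then show ?thesis unfolding orb_def by (rule card_image)
qed

lemma tau_id: "v \<in> V \<Longrightarrow> tau {} v = v"
  unfolding tau_def using rho by simp

lemma orb_sub: "v \<in> V \<Longrightarrow> orb v \<subseteq> V"
  unfolding orb_tau using tau_in Xs_sub by auto

lemma orb_mem: assumes v: "v \<in> V" and w: "w \<in> orb v" shows "orb w = orb v"
proof -
  obtain x0 where x0: "x0 \<in> Xs" "w = tau x0 v" using w unfolding orb_tau by blast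
  have x0U: "x0 \<subseteq> {..<N}" using x0 Xs_sub by simp
  have tw: "tau x w = tau (symdiff x0 x) v" if "x \<in> Xs" for x
    using tau_tau[OF x0U Xs_sub[OF that] v] x0(2) by simp
  show ?thesis
  proof
    show "orb w \<subseteq> orb v"
    proof
      fix u assume "u \<in> orb w"
      then obtain x where x: "x \<in> Xs" "u = tau x w" unfolding orb_tau by blast
      then have "u = tau (symdiff x0 x) v" using tw by simp
      then show "u \<in> orb v" unfolding orb_tau using Xs_sd[OF x0(1) x(1)] by blast
    qed
    show "orb v \<subseteq> orb w"
    proof
      fix u assume "u \<in> orb v"
      then obtain x where x: "x \<in> Xs" "u = tau x v" unfolding orb_tau by blast
      have "tau (symdiff x0 x) w = tau (symdiff x0 (symdiff x0 x)) v" using tw[OF Xs_sd[OF x0(1) x(1)]] .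
      then have "u = tau (symdiff x0 x) w" using x(2) by simp
      then show "u \<in> orb w" unfolding orb_tau using Xs_sd[OF x0(1) x(1)] by blast
    qed
  qed
qed

lemma orbits_eq: "aut_orbits N V boson nb dashed = orb ` V"
  unfolding aut_orbits_def orb_def by simp

lemma card_V_orb: "card V = card AUT * card (orb ` V)"
proof (rule fiber_count[where f=orb])
  show "finite V" by (rule finV)
  show "orb ` V \<subseteq> orb ` V" by simp
  show "finite (orb ` V)" using finV by simp
  fix Ob assume "Ob \<in> orb ` V"
  then obtain v0 where v0: "v0 \<in> V" "Ob = orb v0" by blast
  have "{v\<in>V. orb v = Ob} = orb v0"
  proof
    show "{v\<in>V. orb v = Ob} \<subseteq> orb v0"
    proof
      fix v assume "v \<in> {v\<in>V. orb v = Ob}"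
      then have "v \<in> V" "orb v = orb v0" using v0 by auto
      moreover have "v \<in> orb v" using \<open>v \<in> V\<close> tau_id Xs_empty unfolding orb_tau by force
      ultimately show "v \<in> orb v0" by simp
    qed
    show "orb v0 \<subseteq> {v\<in>V. orb v = Ob}"
      using orb_sub[OF v0(1)] orb_mem[OF v0(1)] v0(2) by auto
  qed
  then show "card {v\<in>V. orb v = Ob} = card AUT" using card_orb[OF v0(1)] by simp
qed

end

theorem mainTheorem8:
  fixes N k :: nat
    and V :: "'v set" and boson :: "'v \<Rightarrow> bool"
    and nb :: "nat \<Rightarrow> 'v \<Rightarrow> 'v" and dashed :: "'v set \<Rightarrow> bool"
    and C :: "nat set set"
  assumes "adinkra N V boson nb dashed"
    and "card V = 2 ^ (N - k)"
    and "doubly_even_code N k C"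
    and "associated_code N V boson nb dashed C"
  shows "let a = (if {..<N} \<in> C then 0 else 1 :: nat) in
           card (adinkra_aut N V boson nb dashed) = 2 ^ (N - 2 * k - a) \<and>
           card (aut_orbits N V boson nb dashed) = 2 ^ (k + a) \<and>
           (\<forall>O1\<in>aut_orbits N V boson nb dashed. \<forall>O2\<in>aut_orbits N V boson nb dashed.
              card O1 = card O2)"
proof -
  obtain bQ dQ \<phi> where ph: "bij_betw \<phi> V (quot_vertices N C)"
      "\<forall>i<N. \<forall>v\<in>V. \<phi> (nb i v) = quot_nb i (\<phi> v)"
    using assms(4) unfolding associated_code_def by blast
  interpret adk N k V boson nb dashed C \<phi>
    using assms(1) assms(3) ph by unfold_locales auto
  define a where "a = (if {..<N} \<in> C then 0 else 1 :: nat)"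
  have cCp: "card Cp = 2 ^ (k + a)" using card_Cp unfolding a_def by simp
  have h1: "card Xs * 2 ^ (k + a) = 2 ^ N" using card_Xs cCp by simp
  then have X: "k + a \<le> N" "card Xs = 2 ^ (N - (k + a))" using pow2_eq by blast+
  have "card AUT * 2 ^ k = 2 ^ (N - (k + a))" using card_aut C_card X(2) by (simp add: mult.commute)
  then have A: "k \<le> N - (k + a)" "card AUT = 2 ^ (N - (k + a) - k)" using pow2_eq by blast+
  have A': "card AUT = 2 ^ (N - 2 * k - a)" using A(2) by (simp add: algebra_simps)
  have "card (orb ` V) * 2 ^ (N - 2 * k - a) = 2 ^ (N - k)"
    using card_V_orb assms(2) A' by (simp add: mult.commute)
  then have Ob: "card (orb ` V) = 2 ^ (N - k - (N - 2 * k - a))" using pow2_eq by blast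
  have "N - k - (N - 2 * k - a) = k + a" using A(1) X(1) by simp
  then have O': "card (aut_orbits N V boson nb dashed) = 2 ^ (k + a)" using Ob orbits_eq by simp
  have eqc: "\<forall>O1\<in>aut_orbits N V boson nb dashed. \<forall>O2\<in>aut_orbits N V boson nb dashed. card O1 = card O2"
    unfolding orbits_eq using card_orb by auto
  show ?thesis unfolding Let_def a_def[symmetric] using A' O' eqc by blast
qed


end
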